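(* For every $n\geqslant 2$, the monoid $\mathcal{AO}_n$ has rank $n$, i.e. the minimum size of a generating set of $\mathcal{AO}_n$ (as a monoid) is $n$.
   Context: Let $\Omega_n=\{1<2<\cdots<n\}$ and $\mathcal{I}_n$ the monoid of all partial injective maps of $\Omega_n$. $\mathcal{AI}_n$ is the set of all $\alpha\in\mathcal{I}_n$ with $\alpha=\sigma|_{\mathrm{Dom}(\alpha)}$ for some even permutation $\sigma$ of $\Omega_n$; $\mathcal{POI}_n$ is the set of order-preserving elements of $\mathcal{I}_n$ and $\mathcal{AO}_n=\mathcal{AI}_n\cap\mathcal{POI}_n$. *)

theory Defs
  imports "HOL-Combinatorics.Permutations"
begin

definition Omega :: "nat \<Rightarrow> nat set" where
  "Omega n = {1..n}"

definition I_mon :: "nat \<Rightarrow> (nat \<rightharpoonup> nat) set" where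
  "I_mon n = {\<alpha>. dom \<alpha> \<subseteq> Omega n \<and> ran \<alpha> \<subseteq> Omega n \<and> inj_on \<alpha> (dom \<alpha>)}"

definition AI :: "nat \<Rightarrow> (nat \<rightharpoonup> nat) set" where
  "AI n = {\<alpha> \<in> I_mon n. \<exists>\<sigma>. \<sigma> permutes Omega n \<and> evenperm \<sigma> \<and>
                                (\<forall>x \<in> dom \<alpha>. \<alpha> x = Some (\<sigma> x))}"

definition POI :: "nat \<Rightarrow> (nat \<rightharpoonup> nat) set" where
  "POI n = {\<alpha> \<in> I_mon n. \<forall>x \<in> dom \<alpha>. \<forall>y \<in> dom \<alpha>. x \<le> y \<longrightarrow> the (\<alpha> x) \<le> the (\<alpha> y)}"

definition AO :: "nat \<Rightarrow> (nat \<rightharpoonup> nat) set" where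
  "AO n = AI n \<inter> POI n"

definition id_n :: "nat \<Rightarrow> (nat \<rightharpoonup> nat)" where
  "id_n n = (\<lambda>x. if x \<in> Omega n then Some x else None)"

inductive_set gen_monoid :: "nat \<Rightarrow> (nat \<rightharpoonup> nat) set \<Rightarrow> (nat \<rightharpoonup> nat) set"
  for n :: nat and A :: "(nat \<rightharpoonup> nat) set" where
  gen_id: "id_n n \<in> gen_monoid n A"
| gen_base: "a \<in> A \<Longrightarrow> a \<in> gen_monoid n A"
| gen_comp: "a \<in> gen_monoid n A \<Longrightarrow> b \<in> gen_monoid n A \<Longrightarrow> (b \<circ>\<^sub>m a) \<in> gen_monoid n A"

definition monoid_rank :: "nat \<Rightarrow> (nat \<rightharpoonup> nat) set \<Rightarrow> nat" where
  "monoid_rank n M = (LEAST k. \<exists>A. A \<subseteq> M \<and> finite A \<and> card A = k \<and> gen_monoid n A = M)"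

end

theory Submission
  imports Defs
begin


definition pe :: "nat set \<Rightarrow> (nat \<rightharpoonup> nat)" where
  "pe X = (\<lambda>x. if x \<in> X then Some x else None)"

definition sh :: "nat \<Rightarrow> nat \<Rightarrow> nat \<Rightarrow> nat" where
  "sh i j k = (if i < k \<and> k \<le> j then k - 1 else if j \<le> k \<and> k < i then k + 1 else k)"

definition xs :: "nat \<Rightarrow> nat \<Rightarrow> nat \<Rightarrow> (nat \<rightharpoonup> nat)" where
  "xs n i j = (\<lambda>k. if k \<in> Omega n \<and> k \<noteq> i then Some (sh i j k) else None)"

definition ext :: "nat \<Rightarrow> nat \<Rightarrow> nat \<Rightarrow> nat" where
  "ext i j k = (if k = i then j else sh i j k)"

lemma id_n_pe: "id_n n = pe (Omega n)"
  by (simp add: id_n_def pe_def)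

lemma sh_inv: "k \<noteq> j \<Longrightarrow> sh i j (sh j i k) = k"
  by (auto simp: sh_def)

lemma sh_trans: "k \<noteq> i \<Longrightarrow> sh j k' (sh i j k) = sh i k' k"
  by (auto simp: sh_def)

lemma sh_Omega: "i \<in> Omega n \<Longrightarrow> j \<in> Omega n \<Longrightarrow> k \<in> Omega n \<Longrightarrow> k \<noteq> i \<Longrightarrow>
   sh i j k \<in> Omega n \<and> sh i j k \<noteq> j"
  by (auto simp: sh_def Omega_def)

lemma sh_mono: "k \<noteq> i \<Longrightarrow> l \<noteq> i \<Longrightarrow> k \<le> l \<Longrightarrow> sh i j k \<le> sh i j l"
  by (auto simp: sh_def)



lemma count_strict:
  fixes S :: "nat set"
  assumes "finite S" "y1 \<in> S" "y2 \<in> S" "y1 < y2"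
  shows "card {z\<in>S. z < y1} < card {z\<in>S. z < y2}"
proof (rule psubset_card_mono)
  show "finite {z\<in>S. z < y2}" using assms by simp
  show "{z\<in>S. z < y1} \<subset> {z\<in>S. z < y2}" using assms by auto
qed

lemma count_inj:
  fixes S :: "nat set"
  assumes "finite S" "y1 \<in> S" "y2 \<in> S" "card {z\<in>S. z < y1} = card {z\<in>S. z < y2}"
  shows "y1 = y2"
  using count_strict[OF assms(1,2,3)] count_strict[OF assms(1,3,2)] assms(4)
  by (metis less_irrefl nat_neq_iff)

lemma count_image:
  fixes f :: "nat \<Rightarrow> nat"
  assumes "strict_mono_on D f" "x \<in> D"
  shows "card {z\<in>f`D. z < f x} = card {y\<in>D. y < x}"
proof -
  have inj: "inj_on f D" using assms(1) strict_mono_on_imp_inj_on by blast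
  have "{z\<in>f`D. z < f x} = f ` {y\<in>D. y < x}"
  proof safe
    fix y assume "y \<in> D" "f y < f x"
    then have "y < x" using assms
      by (metis linorder_neqE_nat order_less_asym strict_mono_onD)
    then show "f y \<in> f ` {y \<in> D. y < x}" using \<open>y\<in>D\<close> by auto
  next
    fix y assume "y \<in> D" "y < x"
    then show "f y < f x" using assms strict_mono_onD by blast
  qed auto
  moreover have "inj_on f {y\<in>D. y < x}" using inj by (rule inj_on_subset) auto
  ultimately show ?thesis by (simp add: card_image)
qed

lemma strict_mono_unique:
  fixes f g :: "nat \<Rightarrow> nat"
  assumes "finite D" "strict_mono_on D f" "strict_mono_on D g" "f ` D = g ` D" "x \<in> D"
  shows "f x = g x"
proof -
  have "card {z\<in>f`D. z < f x} = card {y\<in>D. y < x}" using count_image assms by blast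
  moreover have "card {z\<in>g`D. z < g x} = card {y\<in>D. y < x}" using count_image assms by blast
  ultimately show ?thesis using count_inj[of "f`D" "f x" "g x"] assms by auto
qed

lemma POI_I: "\<alpha> \<in> POI n \<Longrightarrow> \<alpha> \<in> I_mon n"
  by (simp add: POI_def)

lemma POI_strict:
  assumes "\<alpha> \<in> POI n"
  shows "strict_mono_on (dom \<alpha>) (\<lambda>x. the (\<alpha> x))"
proof (rule strict_mono_onI)
  fix x y assume xy: "x \<in> dom \<alpha>" "y \<in> dom \<alpha>" "x < y"
  have le: "the (\<alpha> x) \<le> the (\<alpha> y)" using assms xy by (auto simp: POI_def)
  have "inj_on \<alpha> (dom \<alpha>)" using assms by (auto simp: POI_def I_mon_def)
  then have "\<alpha> x \<noteq> \<alpha> y" using xy by (metis inj_onD less_irrefl)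
  then have "the (\<alpha> x) \<noteq> the (\<alpha> y)" using xy by (metis domD option.sel)
  then show "the (\<alpha> x) < the (\<alpha> y)" using le by simp
qed

lemma ran_the: "ran \<alpha> = (\<lambda>x. the (\<alpha> x)) ` dom \<alpha>"
  by (force simp: ran_def dom_def)

lemma I_finite: "\<alpha> \<in> I_mon n \<Longrightarrow> finite (dom \<alpha>)"
  by (auto simp: I_mon_def Omega_def intro: finite_subset)

lemma I_card_ran: "\<alpha> \<in> I_mon n \<Longrightarrow> card (ran \<alpha>) = card (dom \<alpha>)"
proof -
  assume a: "\<alpha> \<in> I_mon n"
  have "inj_on (\<lambda>x. the (\<alpha> x)) (dom \<alpha>)"
  proof (rule inj_onI)
    fix x y assume "x \<in> dom \<alpha>" "y \<in> dom \<alpha>" "the (\<alpha> x) = the (\<alpha> y)"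
    then have "\<alpha> x = \<alpha> y" by (metis domD option.sel)
    then show "x = y" using a \<open>x \<in> dom \<alpha>\<close> \<open>y \<in> dom \<alpha>\<close> by (auto simp: I_mon_def inj_on_def)
  qed
  then show ?thesis by (simp add: ran_the card_image)
qed

lemma POI_eq:
  assumes "\<alpha> \<in> POI n" "\<beta> \<in> POI n" "dom \<alpha> = dom \<beta>" "ran \<alpha> = ran \<beta>"
  shows "\<alpha> = \<beta>"
proof
  fix k
  show "\<alpha> k = \<beta> k"
  proof (cases "k \<in> dom \<alpha>")
    case True
    have "finite (dom \<alpha>)" using assms I_finite POI_I by blast
    then have "the (\<alpha> k) = the (\<beta> k)"
      using strict_mono_unique[of "dom \<alpha>" "\<lambda>x. the (\<alpha> x)" "\<lambda>x. the (\<beta> x)" k]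
        POI_strict[OF assms(1)] POI_strict[OF assms(2)] assms(3,4) True
      by (simp add: ran_the)
    then show ?thesis using True assms(3) by (metis domD option.sel)
  next
    case False
    then show ?thesis using assms(3) by (metis domIff)
  qed
qed

lemma POI_comp:
  assumes "\<alpha> \<in> POI n" "\<beta> \<in> POI n"
  shows "\<beta> \<circ>\<^sub>m \<alpha> \<in> POI n"
proof -
  have dom: "dom (\<beta> \<circ>\<^sub>m \<alpha>) \<subseteq> dom \<alpha>" by (auto simp: map_comp_def dom_def split: option.splits)
  have ran: "ran (\<beta> \<circ>\<^sub>m \<alpha>) \<subseteq> ran \<beta>" by (auto simp: map_comp_def ran_def split: option.splits)
  have inj: "inj_on (\<beta> \<circ>\<^sub>m \<alpha>) (dom (\<beta> \<circ>\<^sub>m \<alpha>))"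
  proof (rule inj_onI)
    fix x y assume x: "x \<in> dom (\<beta> \<circ>\<^sub>m \<alpha>)" and y: "y \<in> dom (\<beta> \<circ>\<^sub>m \<alpha>)"
      and e: "(\<beta> \<circ>\<^sub>m \<alpha>) x = (\<beta> \<circ>\<^sub>m \<alpha>) y"
    from x obtain a where a: "\<alpha> x = Some a" "a \<in> dom \<beta>" by (auto simp: map_comp_def dom_def split: option.splits)
    from y obtain b where b: "\<alpha> y = Some b" "b \<in> dom \<beta>" by (auto simp: map_comp_def dom_def split: option.splits)
    have "\<beta> a = \<beta> b" using e a b by simp
    then have "a = b" using a b assms(2) by (auto simp: POI_def I_mon_def inj_on_def)
    then have "\<alpha> x = \<alpha> y" using a b by simp
    moreover have "x \<in> dom \<alpha>" "y \<in> dom \<alpha>" using a b by auto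
    ultimately show "x = y" using assms(1) unfolding POI_def I_mon_def inj_on_def by blast
  qed
  have mono: "\<forall>x \<in> dom (\<beta> \<circ>\<^sub>m \<alpha>). \<forall>y \<in> dom (\<beta> \<circ>\<^sub>m \<alpha>). x \<le> y \<longrightarrow>
       the ((\<beta> \<circ>\<^sub>m \<alpha>) x) \<le> the ((\<beta> \<circ>\<^sub>m \<alpha>) y)"
  proof (intro ballI impI)
    fix x y assume x: "x \<in> dom (\<beta> \<circ>\<^sub>m \<alpha>)" and y: "y \<in> dom (\<beta> \<circ>\<^sub>m \<alpha>)" and "x \<le> y"
    from x obtain a where a: "\<alpha> x = Some a" "a \<in> dom \<beta>" by (auto simp: map_comp_def dom_def split: option.splits)
    from y obtain b where b: "\<alpha> y = Some b" "b \<in> dom \<beta>" by (auto simp: map_comp_def dom_def split: option.splits)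
    have "a \<le> b" using assms(1) a b \<open>x \<le> y\<close> unfolding POI_def
      by (metis (mono_tags, lifting) domI mem_Collect_eq option.sel)
    then have "the (\<beta> a) \<le> the (\<beta> b)" using assms(2) a b unfolding POI_def by blast
    then show "the ((\<beta> \<circ>\<^sub>m \<alpha>) x) \<le> the ((\<beta> \<circ>\<^sub>m \<alpha>) y)" using a b by simp
  qed
  have "dom (\<beta> \<circ>\<^sub>m \<alpha>) \<subseteq> Omega n" "ran (\<beta> \<circ>\<^sub>m \<alpha>) \<subseteq> Omega n"
    using assms dom ran unfolding POI_def I_mon_def by auto
  then show ?thesis using inj mono unfolding POI_def I_mon_def by blast
qed



lemma xs_dom: "i \<in> Omega n \<Longrightarrow> dom (xs n i j) = Omega n - {i}"
  by (auto simp: xs_def dom_def)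

lemma xs_ran: assumes "i \<in> Omega n" "j \<in> Omega n" shows "ran (xs n i j) = Omega n - {j}"
proof
  show "ran (xs n i j) \<subseteq> Omega n - {j}" using sh_Omega[OF assms] by (auto simp: xs_def ran_def)
next
  show "Omega n - {j} \<subseteq> ran (xs n i j)"
  proof
    fix y assume y: "y \<in> Omega n - {j}"
    then have "sh j i y \<in> Omega n" "sh j i y \<noteq> i" using sh_Omega[of j n i y] assms by auto
    then have "xs n i j (sh j i y) = Some y" using y sh_inv[of y j i] by (auto simp: xs_def)
    then show "y \<in> ran (xs n i j)" by (auto simp: ran_def)
  qed
qed

lemma xs_POI: assumes "i \<in> Omega n" "j \<in> Omega n" shows "xs n i j \<in> POI n"
proof -
  have inj: "inj_on (xs n i j) (dom (xs n i j))"
  proof (rule inj_onI)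
    fix x y assume "x \<in> dom (xs n i j)" "y \<in> dom (xs n i j)" "xs n i j x = xs n i j y"
    then have "x \<noteq> i" "y \<noteq> i" "sh i j x = sh i j y" by (auto simp: xs_def dom_def split: if_splits)
    then have "sh j i (sh i j x) = sh j i (sh i j y)" by simp
    moreover have "sh j i (sh i j x) = x" using \<open>x \<noteq> i\<close> sh_inv by blast
    moreover have "sh j i (sh i j y) = y" using \<open>y \<noteq> i\<close> sh_inv by blast
    ultimately show "x = y" by simp
  qed
  have mono: "\<forall>x \<in> dom (xs n i j). \<forall>y \<in> dom (xs n i j). x \<le> y \<longrightarrow> the (xs n i j x) \<le> the (xs n i j y)"
    by (auto simp: xs_def dom_def sh_mono split: if_splits)
  show ?thesis using xs_dom[OF assms(1)] xs_ran[OF assms] inj mono unfolding POI_def I_mon_def by auto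
qed

lemma xs_comp: assumes "i \<in> Omega n" "j \<in> Omega n" "k \<in> Omega n"
  shows "xs n j k \<circ>\<^sub>m xs n i j = xs n i k"
proof
  fix m show "(xs n j k \<circ>\<^sub>m xs n i j) m = xs n i k m"
    using sh_Omega[OF assms(1,2), of m] sh_trans[of m i j k]
    by (auto simp: xs_def map_comp_def)
qed

lemma pe_dom: "dom (pe X) = X" by (auto simp: pe_def dom_def)
lemma pe_ran: "ran (pe X) = X" by (auto simp: pe_def ran_def)
lemma pe_POI: "X \<subseteq> Omega n \<Longrightarrow> pe X \<in> POI n"
  by (auto simp: POI_def I_mon_def pe_def dom_def ran_def inj_on_def)
lemma pe_comp: "pe X \<circ>\<^sub>m pe Y = pe (X \<inter> Y)"
  by (auto simp: pe_def map_comp_def)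
lemma xs_ii: "xs n i i = pe (Omega n - {i})"
  by (auto simp: xs_def pe_def sh_def)



fun tau :: "nat \<Rightarrow> nat \<Rightarrow> nat \<Rightarrow> nat" where
  "tau i 0 = id"
| "tau i (Suc m) = (if i \<le> m then transpose m (Suc m) \<circ> tau i m else id)"

lemma tau_ext: "i \<le> j \<Longrightarrow> tau i j = ext i j"
proof (induction j)
  case 0 then show ?case by (simp add: fun_eq_iff ext_def sh_def)
next
  case (Suc m)
  show ?case
  proof (cases "i \<le> m")
    case True
    have "transpose m (Suc m) (ext i m a) = ext i (Suc m) a" for a
    proof -
      consider "a = i" | "a < i" | "i < a \<and> a \<le> m" | "a = Suc m" | "a > Suc m" by linarith
      then show ?thesis using True by cases (auto simp: ext_def sh_def transpose_def)
    qed
    then show ?thesis using Suc True by (simp add: fun_eq_iff)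
  next
    case False
    then have "i = Suc m" using Suc by simp
    then show ?thesis by (simp add: fun_eq_iff ext_def sh_def)
  qed
qed

lemma t1: "permutation (tau i m) \<Longrightarrow> evenperm (transpose m (Suc m) \<circ> tau i m) = (evenperm (transpose m (Suc m)) = evenperm (tau i m))"
  by (rule evenperm_comp[OF permutation_swap_id])

lemma t2: "\<not> evenperm (transpose m (Suc m))" using evenperm_swap[of m "Suc m"] by simp

lemma t3:
  assumes "i \<le> m" "Suc m \<le> n" "1 \<le> i"
    "tau i m permutes Omega n" "permutation (tau i m)" "evenperm (tau i m) \<longleftrightarrow> even (m - i)"
  shows "tau i (Suc m) permutes Omega n \<and> permutation (tau i (Suc m)) \<and> (evenperm (tau i (Suc m)) \<longleftrightarrow> even (Suc m - i))"
proof -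
  have eq: "tau i (Suc m) = transpose m (Suc m) \<circ> tau i m" using assms(1) by simp
  have T: "transpose m (Suc m) permutes Omega n" using assms
    by (intro permutes_swap_id) (simp_all add: Omega_def)
  have P: "permutation (transpose m (Suc m) \<circ> tau i m)"
    by (rule permutation_compose[OF permutation_swap_id assms(5)])
  have S: "Suc m - i = Suc (m - i)" using assms(1) by arith
  have E: "evenperm (transpose m (Suc m) \<circ> tau i m) \<longleftrightarrow> even (Suc m - i)"
    unfolding t1[OF assms(5)] S using t2[of m] assms(6) by simp
  have "transpose m (Suc m) \<circ> tau i m permutes Omega n" by (rule permutes_compose[OF assms(4) T])
  then show ?thesis unfolding eq using P E by (intro conjI)
qed

lemma tau_perm: "1 \<le> i \<Longrightarrow> i \<le> j \<Longrightarrow> j \<le> n \<Longrightarrow>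
  tau i j permutes Omega n \<and> permutation (tau i j) \<and> (evenperm (tau i j) \<longleftrightarrow> even (j - i))"
proof (induction j)
  case 0 then show ?case by simp
next
  case (Suc m)
  show ?case
  proof (cases "i \<le> m")
    case True
    then have IH: "tau i m permutes Omega n \<and> permutation (tau i m) \<and> (evenperm (tau i m) \<longleftrightarrow> even (m - i))"
      using Suc.IH Suc.prems by simp
    show ?thesis by (rule t3) (use True Suc.prems IH in auto)
  next
    case False
    then have "i = Suc m" using Suc.prems by simp
    then show ?thesis using permutes_id[of "Omega n"] evenperm_id permutation_id by (simp add: id_def)
  qed
qed

lemma ext_inv: "ext i j \<circ> ext j i = id"
  by (auto simp: ext_def sh_def fun_eq_iff)

lemma ext_perm: assumes "i \<in> Omega n" "j \<in> Omega n"
  shows "ext i j permutes Omega n \<and> permutation (ext i j) \<and> (evenperm (ext i j) \<longleftrightarrow> even (i + j))"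
proof (cases "i \<le> j")
  case True
  have "1 \<le> i" "j \<le> n" using assms by (auto simp: Omega_def)
  then have "tau i j permutes Omega n \<and> permutation (tau i j) \<and> (evenperm (tau i j) \<longleftrightarrow> even (j - i))"
    using tau_perm[of i j n] True by simp
  moreover have "even (j - i) \<longleftrightarrow> even (i + j)" using True by (auto simp: even_diff_nat)
  ultimately show ?thesis using tau_ext[OF True] by simp
next
  case False
  then have ji: "j \<le> i" by simp
  have "1 \<le> j" "i \<le> n" using assms by (auto simp: Omega_def)
  then have p: "ext j i permutes Omega n" "permutation (ext j i)" "evenperm (ext j i) \<longleftrightarrow> even (i - j)"
    using tau_perm[of j i n] tau_ext[OF ji] ji by simp_all
  have inv: "inv (ext j i) = ext i j" by (rule inv_unique_comp) (simp_all add: ext_inv)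
  have "even (i - j) \<longleftrightarrow> even (i + j)" using ji by (auto simp: even_diff_nat)
  moreover note permutes_inv[OF p(1)] evenperm_inv[OF p(2)] permutation_inverse[OF p(2)]
  ultimately show ?thesis using p(3) unfolding inv by simp
qed



lemma AO_POI: "\<alpha> \<in> AO n \<Longrightarrow> \<alpha> \<in> POI n" by (simp add: AO_def)

lemma AO_comp: assumes "\<alpha> \<in> AO n" "\<beta> \<in> AO n" shows "\<beta> \<circ>\<^sub>m \<alpha> \<in> AO n"
proof -
  have P: "\<beta> \<circ>\<^sub>m \<alpha> \<in> POI n" using assms POI_comp AO_POI by blast
  obtain s where s: "s permutes Omega n" "evenperm s" "\<forall>x \<in> dom \<alpha>. \<alpha> x = Some (s x)"
    using assms(1) by (auto simp: AO_def AI_def)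
  obtain t where t: "t permutes Omega n" "evenperm t" "\<forall>x \<in> dom \<beta>. \<beta> x = Some (t x)"
    using assms(2) by (auto simp: AO_def AI_def)
  have fin: "finite (Omega n)" by (simp add: Omega_def)
  have "t \<circ> s permutes Omega n" by (rule permutes_compose[OF s(1) t(1)])
  moreover have "evenperm (t \<circ> s)" using s t fin
    by (simp add: evenperm_comp permutes_imp_permutation)
  moreover have "\<forall>x \<in> dom (\<beta> \<circ>\<^sub>m \<alpha>). (\<beta> \<circ>\<^sub>m \<alpha>) x = Some ((t \<circ> s) x)"
    using s(3) t(3) by (auto simp: map_comp_def dom_def split: option.splits)
  ultimately show ?thesis using P unfolding AO_def AI_def POI_def by blast
qed

lemma xs_AO: assumes "i \<in> Omega n" "j \<in> Omega n" "even (i + j)" shows "xs n i j \<in> AO n"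
proof -
  have "\<forall>x \<in> dom (xs n i j). xs n i j x = Some (ext i j x)"
    by (auto simp: xs_def ext_def dom_def)
  then show ?thesis using ext_perm[OF assms(1,2)] assms xs_POI[OF assms(1,2)]
    unfolding AO_def AI_def POI_def by blast
qed

lemma id_AO: "id_n n \<in> AO n"
proof -
  have "id_n n \<in> POI n" by (simp add: id_n_pe pe_POI)
  moreover have "\<forall>x \<in> dom (id_n n). id_n n x = Some (id x)" by (auto simp: id_n_def dom_def)
  ultimately show ?thesis unfolding AO_def AI_def POI_def using permutes_id evenperm_id by blast
qed



lemma perm_agree:
  assumes s: "\<sigma> permutes S" and p: "\<pi> permutes S" and i: "i \<in> S" and agree: "\<forall>k\<in>S-{i}. \<sigma> k = \<pi> k"
  shows "\<sigma> = \<pi>"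
proof
  fix k show "\<sigma> k = \<pi> k"
  proof (cases "k \<in> S - {i}")
    case True then show ?thesis using agree by blast
  next
    case False
    show ?thesis
    proof (cases "k \<in> S")
      case False then show ?thesis using permutes_not_in[OF s] permutes_not_in[OF p] by metis
    next
      case True
      then have ki: "k = i" using \<open>k \<notin> S - {i}\<close> by blast
      show ?thesis
      proof (rule ccontr)
        assume ne: "\<sigma> k \<noteq> \<pi> k"
        define m where "m = inv \<sigma> (\<pi> k)"
        have sm: "\<sigma> m = \<pi> k" unfolding m_def using permutes_inverses(1)[OF s] by metis
        have "\<pi> k \<in> S" using permutes_in_image[OF p] True by blast
        then have mS: "m \<in> S" using sm permutes_in_image[OF s] by metis
        have "m \<noteq> i" using sm ne ki by metis
        then have "\<sigma> m = \<pi> m" using agree mS by blast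
        then have "\<pi> m = \<pi> k" using sm by simp
        then have "m = k" using permutes_inj[OF p] by (metis injD)
        then show False using \<open>m \<noteq> i\<close> ki by simp
      qed
    qed
  qed
qed

lemma xs_eq: assumes "\<alpha> \<in> POI n" "i \<in> Omega n" "j \<in> Omega n" "dom \<alpha> = Omega n - {i}" "ran \<alpha> = Omega n - {j}"
  shows "\<alpha> = xs n i j"
  using POI_eq[OF assms(1) xs_POI[OF assms(2,3)]] assms xs_dom xs_ran by simp

lemma AO_parity: assumes "\<alpha> \<in> AO n" "i \<in> Omega n" "j \<in> Omega n" "dom \<alpha> = Omega n - {i}" "ran \<alpha> = Omega n - {j}"
  shows "even (i + j)"
proof -
  have a: "\<alpha> = xs n i j" using xs_eq assms AO_POI by blast
  obtain \<sigma> where s: "\<sigma> permutes Omega n" "evenperm \<sigma>" "\<forall>x \<in> dom \<alpha>. \<alpha> x = Some (\<sigma> x)"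
    using assms(1) by (auto simp: AO_def AI_def)
  have "\<forall>k\<in>Omega n - {i}. \<sigma> k = ext i j k"
    using s(3) assms(4) unfolding a by (auto simp: xs_def ext_def)
  then have "\<sigma> = ext i j" using perm_agree[OF s(1) _ assms(2)] ext_perm[OF assms(2,3)] by blast
  then show ?thesis using s(2) ext_perm[OF assms(2,3)] by simp
qed

lemma dom_full: assumes "\<alpha> \<in> POI n" "dom \<alpha> = Omega n" shows "\<alpha> = id_n n"
proof -
  have I: "\<alpha> \<in> I_mon n" using assms POI_I by blast
  have "ran \<alpha> \<subseteq> Omega n" using I by (simp add: I_mon_def)
  moreover have "card (ran \<alpha>) = card (Omega n)" using I_card_ran[OF I] assms by simp
  ultimately have "ran \<alpha> = Omega n" by (intro card_subset_eq) (auto simp: Omega_def)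
  then show ?thesis unfolding id_n_pe
    using POI_eq[OF assms(1) pe_POI[of "Omega n" n]] assms pe_dom pe_ran by simp
qed

lemma gen_inv:
  assumes "x \<in> gen_monoid n A"
  shows "x = id_n n \<or> (\<exists>a\<in>A. a \<noteq> id_n n \<and> dom x \<subseteq> dom a)"
  using assms
proof (induction rule: gen_monoid.induct)
  case gen_id then show ?case by simp
next
  case (gen_base a) then show ?case by blast
next
  case (gen_comp a b)
  have d1: "dom (b \<circ>\<^sub>m a) \<subseteq> dom a" by (auto simp: map_comp_def dom_def split: option.splits)
  have d2: "dom (b \<circ>\<^sub>m id_n n) \<subseteq> dom b" by (auto simp: map_comp_def dom_def id_n_def split: option.splits if_splits)
  have ii: "id_n n \<circ>\<^sub>m id_n n = id_n n" by (simp add: id_n_pe pe_comp)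
  show ?case
  proof (cases "a = id_n n")
    case True
    show ?thesis
    proof (cases "b = id_n n")
      case True then show ?thesis using \<open>a = id_n n\<close> ii by simp
    next
      case False
      then obtain c where "c \<in> A" "c \<noteq> id_n n" "dom b \<subseteq> dom c" using gen_comp.IH(2) by blast
      then show ?thesis using d2 \<open>a = id_n n\<close> by blast
    qed
  next
    case False
    then obtain c where "c \<in> A" "c \<noteq> id_n n" "dom a \<subseteq> dom c" using gen_comp.IH(1) by blast
    then show ?thesis using d1 by blast
  qed
qed

lemma lower_bound:
  assumes "A \<subseteq> AO n" "finite A" "gen_monoid n A = AO n"
  shows "n \<le> card A"
proof -
  have "\<forall>i\<in>Omega n. \<exists>a\<in>A. dom a = Omega n - {i}"
  proof
    fix i assume i: "i \<in> Omega n"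
    have "xs n i i \<in> AO n" using xs_AO[OF i i] by simp
    then have g: "xs n i i \<in> gen_monoid n A" using assms(3) by simp
    have "xs n i i \<noteq> id_n n"
    proof
      assume "xs n i i = id_n n"
      then have "dom (xs n i i) = dom (id_n n)" by simp
      then have "Omega n - {i} = Omega n" using xs_dom[OF i] by (simp add: id_n_pe pe_dom)
      then show False using i by blast
    qed
    then obtain a where a: "a \<in> A" "a \<noteq> id_n n" "Omega n - {i} \<subseteq> dom a"
      using gen_inv[OF g] xs_dom[OF i] by auto
    have aP: "a \<in> POI n" using a assms(1) AO_POI by blast
    have "dom a \<subseteq> Omega n" using aP by (simp add: POI_def I_mon_def)
    moreover have "i \<notin> dom a"
    proof
      assume "i \<in> dom a"
      then have "dom a = Omega n" using a(3) \<open>dom a \<subseteq> Omega n\<close> by blast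
      then show False using dom_full[OF aP] a(2) by simp
    qed
    ultimately show "\<exists>a\<in>A. dom a = Omega n - {i}" using a by blast
  qed
  then obtain h where h: "\<forall>i\<in>Omega n. h i \<in> A \<and> dom (h i) = Omega n - {i}" by metis
  have "inj_on h (Omega n)"
  proof (rule inj_onI)
    fix i j assume "i \<in> Omega n" "j \<in> Omega n" "h i = h j"
    then have "Omega n - {i} = Omega n - {j}" using h by metis
    then show "i = j" using \<open>i \<in> Omega n\<close> \<open>j \<in> Omega n\<close> by blast
  qed
  then have "card (Omega n) \<le> card A" using card_inj_on_le[of h "Omega n" A] h assms(2) by blast
  then show ?thesis by (simp add: Omega_def)
qed



definition nxt :: "nat \<Rightarrow> nat \<Rightarrow> nat" where
  "nxt n i = (if i + 2 \<le> n then i + 2 else if odd i then 1 else 2)"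

definition Agen :: "nat \<Rightarrow> (nat \<rightharpoonup> nat) set" where
  "Agen n = (\<lambda>i. xs n i (nxt n i)) ` Omega n"

lemma nxt_props: "2 \<le> n \<Longrightarrow> i \<in> Omega n \<Longrightarrow> nxt n i \<in> Omega n \<and> even (i + nxt n i)"
  by (auto simp: nxt_def Omega_def)

lemma Agen_AO: "2 \<le> n \<Longrightarrow> Agen n \<subseteq> AO n"
  using nxt_props xs_AO by (auto simp: Agen_def)

lemma Agen_card: "card (Agen n) = n"
proof -
  have "inj_on (\<lambda>i. xs n i (nxt n i)) (Omega n)"
  proof (rule inj_onI)
    fix i j assume ij: "i \<in> Omega n" "j \<in> Omega n" "xs n i (nxt n i) = xs n j (nxt n j)"
    then have "Omega n - {i} = Omega n - {j}" using xs_dom by metis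
    then show "i = j" using ij by blast
  qed
  then show ?thesis by (simp add: Agen_def card_image Omega_def)
qed

lemma gen_AO: assumes "2 \<le> n" shows "gen_monoid n (Agen n) \<subseteq> AO n"
proof
  fix x assume "x \<in> gen_monoid n (Agen n)"
  then show "x \<in> AO n"
    by (induction rule: gen_monoid.induct) (use Agen_AO[OF assms] id_AO AO_comp in blast)+
qed

lemma gen_step: "i \<in> Omega n \<Longrightarrow> xs n i (nxt n i) \<in> gen_monoid n (Agen n)"
  by (rule gen_base) (auto simp: Agen_def)

lemma P_up: assumes "2 \<le> n" "i \<in> Omega n"
  shows "i + 2 * Suc d \<le> n \<Longrightarrow> xs n i (i + 2 * Suc d) \<in> gen_monoid n (Agen n)"
proof (induction d)
  case 0
  then have "nxt n i = i + 2" by (simp add: nxt_def)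
  then show ?case using gen_step[OF assms(2)] by simp
next
  case (Suc d)
  let ?j = "i + 2 * Suc d"
  have j: "?j \<in> Omega n" "?j + 2 \<le> n" using Suc.prems assms by (auto simp: Omega_def)
  then have "nxt n ?j = ?j + 2" by (simp add: nxt_def)
  then have g: "xs n ?j (?j + 2) \<in> gen_monoid n (Agen n)" using gen_step[OF j(1)] by simp
  have IH: "xs n i ?j \<in> gen_monoid n (Agen n)" using Suc by simp
  have k: "?j + 2 \<in> Omega n" using j by (auto simp: Omega_def)
  have "xs n ?j (?j + 2) \<circ>\<^sub>m xs n i ?j = xs n i (?j + 2)" using xs_comp[OF assms(2) j(1) k] .
  moreover have "?j + 2 = i + 2 * Suc (Suc d)" by simp
  ultimately show ?case using gen_monoid.gen_comp[OF IH g] by simp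
qed

lemma P_lt: assumes "2 \<le> n" "i \<in> Omega n" "j \<in> Omega n" "i < j" "even (i + j)"
  shows "xs n i j \<in> gen_monoid n (Agen n)"
proof -
  have ev: "even (j - i)" using assms(4,5) by (simp add: even_diff_nat)
  then obtain q where q: "j - i = 2 * q" using evenE by blast
  then have "q \<noteq> 0" using assms(4) by simp
  then obtain d where "q = Suc d" using not0_implies_Suc by blast
  then have "j = i + 2 * Suc d" using q assms(4) by simp
  then show ?thesis using P_up[OF assms(1,2)] assms(3) by (auto simp: Omega_def)
qed



lemma all_xs: assumes n: "2 \<le> n" and i: "i \<in> Omega n" and j: "j \<in> Omega n" and e: "even (i + j)"
  shows "xs n i j \<in> gen_monoid n (Agen n)"
proof -
  define top where "top = (if even (n + i) then n else n - 1)"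
  define base where "base = (if odd i then 1 else (2::nat))"
  have ni: "odd (n + i) \<Longrightarrow> i \<noteq> n" by auto
  have top: "top \<in> Omega n" "i \<le> top" "even (i + top)" using n i ni by (auto simp: top_def Omega_def)
  have nt: "nxt n top = base" using n i by (auto simp: top_def base_def nxt_def Omega_def)
  have base: "base \<in> Omega n" "base \<le> i" "base \<le> j" "even (base + j)" "even (base + i)"
    using n i j e by (auto simp: base_def Omega_def)
  have Ptb: "xs n top base \<in> gen_monoid n (Agen n)" using gen_step[OF top(1)] nt by simp
  have Pib: "xs n i base \<in> gen_monoid n (Agen n)"
  proof (cases "i = top")
    case True then show ?thesis using Ptb by simp
  next
    case False
    then have "i < top" using top by simp
    then have "xs n i top \<in> gen_monoid n (Agen n)" using P_lt[OF n i top(1)] top(3) by simp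
    then have "xs n top base \<circ>\<^sub>m xs n i top \<in> gen_monoid n (Agen n)"
      using Ptb by (rule gen_monoid.gen_comp)
    then show ?thesis using xs_comp[OF i top(1) base(1)] by simp
  qed
  show ?thesis
  proof (cases "j = base")
    case True then show ?thesis using Pib by simp
  next
    case False
    then have "base < j" using base by simp
    then have "xs n base j \<in> gen_monoid n (Agen n)" using P_lt[OF n base(1) j] base(4) by simp
    then have "xs n base j \<circ>\<^sub>m xs n i base \<in> gen_monoid n (Agen n)"
      using Pib by (intro gen_monoid.gen_comp)
    then show ?thesis using xs_comp[OF i base(1) j] by simp
  qed
qed

lemma pe_G_aux: assumes n: "2 \<le> n" shows "finite F \<Longrightarrow> pe (Omega n - F) \<in> gen_monoid n (Agen n)"
proof (induction F rule: finite_induct)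
  case empty then show ?case using gen_monoid.gen_id[of n "Agen n"] by (simp add: id_n_pe)
next
  case (insert p F)
  show ?case
  proof (cases "p \<in> Omega n")
    case True
    have "xs n p p \<in> gen_monoid n (Agen n)" using all_xs[OF n True True] by simp
    then have "pe (Omega n - {p}) \<circ>\<^sub>m pe (Omega n - F) \<in> gen_monoid n (Agen n)"
      using insert.IH by (simp add: xs_ii gen_monoid.gen_comp)
    moreover have "(Omega n - {p}) \<inter> (Omega n - F) = Omega n - insert p F" by blast
    ultimately show ?thesis by (simp add: pe_comp)
  next
    case False
    then have "Omega n - insert p F = Omega n - F" by blast
    then show ?thesis using insert.IH by simp
  qed
qed

lemma pe_G: assumes "2 \<le> n" "X \<subseteq> Omega n" shows "pe X \<in> gen_monoid n (Agen n)"
proof -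
  have "X = Omega n - (Omega n - X)" using assms(2) by blast
  moreover have "finite (Omega n - X)" by (simp add: Omega_def)
  ultimately show ?thesis using pe_G_aux[OF assms(1)] by metis
qed



lemma H1: assumes "g \<in> Omega n" "t \<in> Omega n" "dom \<beta> \<subseteq> Omega n - {g}"
  shows "(\<beta> \<circ>\<^sub>m xs n t g) \<circ>\<^sub>m xs n g t = \<beta>"
proof
  fix k show "((\<beta> \<circ>\<^sub>m xs n t g) \<circ>\<^sub>m xs n g t) k = \<beta> k"
  proof (cases "k \<in> Omega n - {g}")
    case True
    then have "sh g t k \<in> Omega n" "sh g t k \<noteq> t" using sh_Omega[OF assms(1,2)] by auto
    then show ?thesis using True sh_inv[of k g t] by (auto simp: xs_def map_comp_def)
  next
    case False
    then have "\<beta> k = None" using assms(3) by auto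
    then show ?thesis using False by (auto simp: xs_def map_comp_def)
  qed
qed

lemma H2: assumes "g \<in> Omega n" "t \<in> Omega n" "dom \<beta> \<subseteq> Omega n - {g}"
  shows "dom (\<beta> \<circ>\<^sub>m xs n t g) = sh g t ` dom \<beta>"
proof
  show "dom (\<beta> \<circ>\<^sub>m xs n t g) \<subseteq> sh g t ` dom \<beta>"
  proof
    fix k assume "k \<in> dom (\<beta> \<circ>\<^sub>m xs n t g)"
    then have k: "k \<in> Omega n" "k \<noteq> t" "sh t g k \<in> dom \<beta>"
      by (auto simp: xs_def map_comp_def dom_def split: if_splits)
    then have "k = sh g t (sh t g k)" using sh_inv by metis
    then show "k \<in> sh g t ` dom \<beta>" using k by blast
  qed
next
  show "sh g t ` dom \<beta> \<subseteq> dom (\<beta> \<circ>\<^sub>m xs n t g)"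
  proof
    fix k assume "k \<in> sh g t ` dom \<beta>"
    then obtain d where d: "d \<in> dom \<beta>" "k = sh g t d" by blast
    then have "d \<in> Omega n" "d \<noteq> g" using assms(3) by auto
    then have "k \<in> Omega n" "k \<noteq> t" "sh t g k = d" using sh_Omega[OF assms(1,2)] sh_inv d by auto
    then show "k \<in> dom (\<beta> \<circ>\<^sub>m xs n t g)" using d by (auto simp: xs_def map_comp_def dom_def)
  qed
qed

lemma H3: assumes "g \<in> Omega n" "t \<in> Omega n" "dom \<beta> \<subseteq> Omega n - {g}"
  shows "ran (\<beta> \<circ>\<^sub>m xs n t g) = ran \<beta>"
proof
  show "ran (\<beta> \<circ>\<^sub>m xs n t g) \<subseteq> ran \<beta>" by (auto simp: map_comp_def ran_def split: option.splits)
next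
  show "ran \<beta> \<subseteq> ran (\<beta> \<circ>\<^sub>m xs n t g)"
  proof
    fix v assume "v \<in> ran \<beta>"
    then obtain d where d: "\<beta> d = Some v" by (auto simp: ran_def)
    then have "d \<in> Omega n" "d \<noteq> g" using assms(3) by auto
    then have "sh g t d \<in> Omega n" "sh g t d \<noteq> t" "sh t g (sh g t d) = d" using sh_Omega[OF assms(1,2)] sh_inv by auto
    then have "(\<beta> \<circ>\<^sub>m xs n t g) (sh g t d) = Some v" using d by (simp add: xs_def map_comp_def)
    then show "v \<in> ran (\<beta> \<circ>\<^sub>m xs n t g)" by (auto simp: ran_def)
  qed
qed

lemma H4: assumes "g \<in> Omega n" "t \<in> Omega n" "ran \<beta> \<subseteq> Omega n - {g}"
  shows "xs n t g \<circ>\<^sub>m (xs n g t \<circ>\<^sub>m \<beta>) = \<beta>"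
proof
  fix k show "(xs n t g \<circ>\<^sub>m (xs n g t \<circ>\<^sub>m \<beta>)) k = \<beta> k"
  proof (cases "\<beta> k")
    case None then show ?thesis by (simp add: map_comp_def)
  next
    case (Some v)
    then have "v \<in> Omega n - {g}" using assms(3) by (auto simp: ran_def)
    then have "sh g t v \<in> Omega n" "sh g t v \<noteq> t" "sh t g (sh g t v) = v" using sh_Omega[OF assms(1,2)] sh_inv by auto
    then show ?thesis using Some \<open>v \<in> Omega n - {g}\<close> by (simp add: xs_def map_comp_def)
  qed
qed

lemma H5: assumes "g \<in> Omega n" "ran \<beta> \<subseteq> Omega n - {g}"
  shows "dom (xs n g t \<circ>\<^sub>m \<beta>) = dom \<beta>"
proof
  show "dom (xs n g t \<circ>\<^sub>m \<beta>) \<subseteq> dom \<beta>" by (auto simp: map_comp_def dom_def split: option.splits)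
next
  show "dom \<beta> \<subseteq> dom (xs n g t \<circ>\<^sub>m \<beta>)"
  proof
    fix k assume "k \<in> dom \<beta>"
    then obtain v where v: "\<beta> k = Some v" by auto
    then have "v \<in> Omega n - {g}" using assms(2) by (auto simp: ran_def)
    then show "k \<in> dom (xs n g t \<circ>\<^sub>m \<beta>)" using v by (auto simp: xs_def map_comp_def dom_def)
  qed
qed

lemma H6: assumes "g \<in> Omega n" "ran \<beta> \<subseteq> Omega n - {g}"
  shows "ran (xs n g t \<circ>\<^sub>m \<beta>) = sh g t ` ran \<beta>"
proof
  show "ran (xs n g t \<circ>\<^sub>m \<beta>) \<subseteq> sh g t ` ran \<beta>"
    by (auto simp: map_comp_def ran_def xs_def split: option.splits if_splits)
next
  show "sh g t ` ran \<beta> \<subseteq> ran (xs n g t \<circ>\<^sub>m \<beta>)"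
  proof
    fix w assume "w \<in> sh g t ` ran \<beta>"
    then obtain v k where v: "\<beta> k = Some v" "w = sh g t v" by (auto simp: ran_def)
    then have "v \<in> Omega n - {g}" using assms(2) by (auto simp: ran_def)
    then have "(xs n g t \<circ>\<^sub>m \<beta>) k = Some w" using v by (simp add: xs_def map_comp_def)
    then show "w \<in> ran (xs n g t \<circ>\<^sub>m \<beta>)" by (auto simp: ran_def)
  qed
qed

lemma H7: assumes "finite X" "g \<notin> X" "g < t" "e \<in> X" "g < e" "e \<le> t"
  shows "card (sh g t ` X) = card X \<and> \<Sum>(sh g t ` X) < \<Sum>X"
proof -
  have inj: "inj_on (sh g t) X"
  proof (rule inj_onI)
    fix x y assume "x \<in> X" "y \<in> X" "sh g t x = sh g t y"
    then have "sh t g (sh g t x) = sh t g (sh g t y)" by simp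
    then show "x = y" using sh_inv \<open>x \<in> X\<close> \<open>y \<in> X\<close> assms(2) by metis
  qed
  have "sum (sh g t) X < sum id X"
  proof (rule sum_strict_mono_ex1[OF assms(1)])
    show "\<forall>x\<in>X. sh g t x \<le> id x" using assms(3) by (auto simp: sh_def)
    show "\<exists>a\<in>X. sh g t a < id a" using assms(3-6) by (auto simp: sh_def intro!: bexI[of _ e])
  qed
  then show ?thesis using inj by (simp add: card_image sum.reindex)
qed



lemma downset: assumes "D \<subseteq> Omega n" "\<forall>g\<in>Omega n - D. \<forall>d\<in>D. \<not> g < d"
  shows "D = {1..card D}"
proof (cases "D = {}")
  case True then show ?thesis by simp
next
  case False
  have fin: "finite D" using assms(1) by (auto simp: Omega_def intro: finite_subset)
  define M where "M = Max D"
  have M: "M \<in> D" "\<forall>d\<in>D. d \<le> M" using fin False by (auto simp: M_def)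
  have "D = {1..M}"
  proof
    show "D \<subseteq> {1..M}" using M assms(1) by (auto simp: Omega_def)
  next
    show "{1..M} \<subseteq> D"
    proof
      fix y assume y: "y \<in> {1..M}"
      have "M \<le> n" using M assms(1) by (auto simp: Omega_def)
      then have yO: "y \<in> Omega n" using y by (auto simp: Omega_def)
      show "y \<in> D"
      proof (rule ccontr)
        assume "y \<notin> D"
        then have "y < M" using y M by (metis atLeastAtMost_iff le_neq_implies_less)
        then show False using assms(2) yO \<open>y \<notin> D\<close> M(1) by blast
      qed
    qed
  qed
  then show ?thesis by simp
qed

lemma L1: assumes "g \<notin> D" "1 \<le> g" "d \<in> D" "g < d" "d \<le> n"
  "g + 2 \<le> n \<or> g + 1 \<notin> D \<or> even (g + d)"
  shows "\<exists>g' t. g' \<in> Omega n \<and> t \<in> Omega n \<and> g' \<notin> D \<and> g' < t \<and> even (g' + t) \<and> (\<exists>e\<in>D. g' < e \<and> e \<le> t)"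
proof (cases "even (g + d)")
  case True
  then show ?thesis using assms by (intro exI[of _ g] exI[of _ d]) (auto simp: Omega_def)
next
  case False
  show ?thesis
  proof (cases "g + 1 \<in> D")
    case True
    then have "g + 2 \<le> n" using assms(6) False by blast
    then show ?thesis using assms True
      by (intro exI[of _ g] exI[of _ "g+2"]) (auto simp: Omega_def intro!: bexI[of _ "g+1"])
  next
    case c: False
    then have "d \<noteq> g + 1" using assms(3) by blast
    then have "g + 1 < d" using assms(4) by simp
    then show ?thesis using assms c False
      by (intro exI[of _ "g+1"] exI[of _ d]) (auto simp: Omega_def)
  qed
qed

lemma shift_exists: assumes "D \<subseteq> Omega n" "card D + 2 \<le> n" "D \<noteq> {1..card D}"
  shows "\<exists>g t. g \<in> Omega n \<and> t \<in> Omega n \<and> g \<notin> D \<and> g < t \<and> even (g + t) \<and> (\<exists>e\<in>D. g < e \<and> e \<le> t)"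
proof -
  obtain g d where gd: "g \<in> Omega n - D" "d \<in> D" "g < d" using downset[OF assms(1)] assms(3) by blast
  have dn: "d \<le> n" "1 \<le> g" using gd assms(1) by (auto simp: Omega_def)
  show ?thesis
  proof (cases "g + 2 \<le> n \<or> g + 1 \<notin> D \<or> even (g + d)")
    case True then show ?thesis using L1[of g D d n] gd dn by blast
  next
    case False
    then have gn: "g = n - 1" "d = n" using gd dn by auto
    have "card (Omega n - D) = n - card D" using assms(1) by (simp add: card_Diff_subset Omega_def finite_subset)
    then have c2: "2 \<le> card (Omega n - D)" using assms(2) by simp
    have "\<exists>h\<in>Omega n - D. h \<noteq> g"
    proof (rule ccontr)
      assume "\<not> ?thesis"
      then have "Omega n - D \<subseteq> {g}" by blast
      then have "card (Omega n - D) \<le> card {g}" by (intro card_mono) auto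
      then show False using c2 by simp
    qed
    then obtain h where h: "h \<in> Omega n - D" "h \<noteq> g" by blast
    have "h \<noteq> n" using h gd gn by blast
    then have "h + 2 \<le> n" "1 \<le> h" "h < n" using h gn by (auto simp: Omega_def)
    then show ?thesis using L1[of h D n n] h gd gn by auto
  qed
qed



lemma low_rank: assumes n: "2 \<le> n"
  shows "\<beta> \<in> POI n \<Longrightarrow> card (dom \<beta>) + 2 \<le> n \<Longrightarrow> \<beta> \<in> gen_monoid n (Agen n)"
proof (induction "\<Sum>(dom \<beta>) + \<Sum>(ran \<beta>)" arbitrary: \<beta> rule: less_induct)
  case less
  have I: "\<beta> \<in> I_mon n" using less.prems(1) POI_I by blast
  have DO: "dom \<beta> \<subseteq> Omega n" "ran \<beta> \<subseteq> Omega n" using I by (auto simp: I_mon_def)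
  have finD: "finite (dom \<beta>)" using I I_finite by blast
  have finR: "finite (ran \<beta>)" using DO(2) by (auto simp: Omega_def intro: finite_subset)
  have cR: "card (ran \<beta>) = card (dom \<beta>)" using I_card_ran[OF I] .
  show ?case
  proof (cases "dom \<beta> = {1..card (dom \<beta>)}")
    case False
    obtain g t e where gt: "g \<in> Omega n" "t \<in> Omega n" "g \<notin> dom \<beta>" "g < t" "even (g + t)"
      "e \<in> dom \<beta>" "g < e" "e \<le> t"
      using shift_exists[OF DO(1) less.prems(2) False] by blast
    define \<beta>' where "\<beta>' = \<beta> \<circ>\<^sub>m xs n t g"
    have dsub: "dom \<beta> \<subseteq> Omega n - {g}" using DO gt by blast
    have P': "\<beta>' \<in> POI n" unfolding \<beta>'_def by (rule POI_comp[OF xs_POI[OF gt(2,1)] less.prems(1)])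
    have d': "dom \<beta>' = sh g t ` dom \<beta>" unfolding \<beta>'_def using H2[OF gt(1,2) dsub] .
    have r': "ran \<beta>' = ran \<beta>" unfolding \<beta>'_def using H3[OF gt(1,2) dsub] .
    have h7: "card (dom \<beta>') = card (dom \<beta>) \<and> \<Sum>(dom \<beta>') < \<Sum>(dom \<beta>)"
      unfolding d' using H7[OF finD gt(3,4,6,7,8)] .
    have "\<beta>' \<in> gen_monoid n (Agen n)"
      using less.hyps[OF _ P'] h7 r' less.prems(2) by simp
    moreover have "xs n g t \<in> gen_monoid n (Agen n)" using all_xs[OF n gt(1,2)] gt(5) by simp
    ultimately have "\<beta>' \<circ>\<^sub>m xs n g t \<in> gen_monoid n (Agen n)" by (rule gen_monoid.gen_comp[rotated])
    then show ?thesis using H1[OF gt(1,2) dsub] unfolding \<beta>'_def by simp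
  next
    case Dtrue: True
    show ?thesis
    proof (cases "ran \<beta> = {1..card (ran \<beta>)}")
      case False
      obtain g t e where gt: "g \<in> Omega n" "t \<in> Omega n" "g \<notin> ran \<beta>" "g < t" "even (g + t)"
        "e \<in> ran \<beta>" "g < e" "e \<le> t"
        using shift_exists[OF DO(2) _ False] less.prems(2) cR by auto
      define \<beta>' where "\<beta>' = xs n g t \<circ>\<^sub>m \<beta>"
      have rsub: "ran \<beta> \<subseteq> Omega n - {g}" using DO gt by blast
      have P': "\<beta>' \<in> POI n" unfolding \<beta>'_def by (rule POI_comp[OF less.prems(1) xs_POI[OF gt(1,2)]])
      have d': "dom \<beta>' = dom \<beta>" unfolding \<beta>'_def using H5[OF gt(1) rsub] .
      have r': "ran \<beta>' = sh g t ` ran \<beta>" unfolding \<beta>'_def using H6[OF gt(1) rsub] .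
      have h7: "card (ran \<beta>') = card (ran \<beta>) \<and> \<Sum>(ran \<beta>') < \<Sum>(ran \<beta>)"
        unfolding r' using H7[OF finR gt(3,4,6,7,8)] .
      have "\<beta>' \<in> gen_monoid n (Agen n)"
        using less.hyps[OF _ P'] h7 d' less.prems(2) by simp
      moreover have "xs n t g \<in> gen_monoid n (Agen n)" using all_xs[OF n gt(2,1)] gt(5) by (simp add: add.commute)
      ultimately have "xs n t g \<circ>\<^sub>m \<beta>' \<in> gen_monoid n (Agen n)" by (rule gen_monoid.gen_comp)
      then show ?thesis using H4[OF gt(1,2) rsub] unfolding \<beta>'_def by simp
    next
      case True
      have sub: "{1..card (dom \<beta>)} \<subseteq> Omega n" using less.prems(2) by (auto simp: Omega_def)
      have "\<beta> = pe {1..card (dom \<beta>)}"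
        using POI_eq[OF less.prems(1) pe_POI[OF sub]] Dtrue True cR pe_dom pe_ran by metis
      then show ?thesis using pe_G[OF n sub] by simp
    qed
  qed
qed

lemma AO_sub: assumes n: "2 \<le> n" shows "AO n \<subseteq> gen_monoid n (Agen n)"
proof
  fix \<alpha> assume a: "\<alpha> \<in> AO n"
  have P: "\<alpha> \<in> POI n" using a AO_POI by blast
  have I: "\<alpha> \<in> I_mon n" using P POI_I by blast
  have DO: "dom \<alpha> \<subseteq> Omega n" "ran \<alpha> \<subseteq> Omega n" using I by (auto simp: I_mon_def)
  have fO: "finite (Omega n)" "card (Omega n) = n" by (auto simp: Omega_def)
  have cR: "card (ran \<alpha>) = card (dom \<alpha>)" using I_card_ran[OF I] .
  have cle: "card (dom \<alpha>) \<le> n" using card_mono[OF fO(1) DO(1)] fO by simp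
  have cd: "card (Omega n - dom \<alpha>) = n - card (dom \<alpha>)" "card (Omega n - ran \<alpha>) = n - card (ran \<alpha>)"
    using DO fO by (simp_all add: card_Diff_subset finite_subset)
  consider "card (dom \<alpha>) = n" | "card (dom \<alpha>) = n - 1" | "card (dom \<alpha>) + 2 \<le> n" using cle by linarith
  then show "\<alpha> \<in> gen_monoid n (Agen n)"
  proof cases
    case 1
    then have "dom \<alpha> = Omega n" using card_subset_eq[OF fO(1) DO(1)] fO by simp
    then have "\<alpha> = id_n n" using dom_full[OF P] by simp
    then show ?thesis using gen_monoid.gen_id by simp
  next
    case 2
    then have "card (Omega n - dom \<alpha>) = 1" "card (Omega n - ran \<alpha>) = 1" using cd cR n by simp_all
    then obtain i j where ij: "Omega n - dom \<alpha> = {i}" "Omega n - ran \<alpha> = {j}" by (meson card_1_singletonE)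
    then have ijO: "i \<in> Omega n" "j \<in> Omega n" by auto
    have dr: "dom \<alpha> = Omega n - {i}" "ran \<alpha> = Omega n - {j}" using ij DO by blast+
    have "even (i + j)" using AO_parity[OF a ijO dr] .
    moreover have "\<alpha> = xs n i j" using xs_eq[OF P ijO dr] .
    ultimately show ?thesis using all_xs[OF n ijO] by simp
  next
    case 3
    then show ?thesis using low_rank[OF n P] by simp
  qed
qed

theorem theorem4p8:
  fixes n :: nat
  assumes "n \<ge> 2"
  shows "monoid_rank n (AO n) = n"
  unfolding monoid_rank_def
proof (rule Least_equality)
  have "gen_monoid n (Agen n) = AO n" using gen_AO[OF assms] AO_sub[OF assms] by blast
  moreover have "finite (Agen n)" by (simp add: Agen_def Omega_def)
  ultimately show "\<exists>A. A \<subseteq> AO n \<and> finite A \<and> card A = n \<and> gen_monoid n A = AO n"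
    using Agen_AO[OF assms] Agen_card by blast
next
  fix y assume "\<exists>A. A \<subseteq> AO n \<and> finite A \<and> card A = y \<and> gen_monoid n A = AO n"
  then show "n \<le> y" using lower_bound by blast
qed


end
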